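(* Let $\mathbb{K}$ be a field and $n\geq 1$. (1) For non-empty subsets $I,J$ of $\{1,\dots,n\}$, the spaces $\mathcal{V}^{(1^\star)}_I$ and $\mathcal{V}^{(1^\star)}_J$ are similar if and only if $I=J$. (2) For non-empty proper subsets $I,J$ of $\{1,\dots,n\}$, the spaces $\mathcal{V}^{(2)}_I$ and $\mathcal{V}^{(2)}_J$ are similar if and only if $I=J$ or $I=\{1,\dots,n\}\setminus J$.
   Context: Two subsets $\mathcal{V},\mathcal{W}$ of $M_n(\mathbb{K})$ are similar if $\mathcal{W}=P\mathcal{V}P^{-1}$ for some invertible $P$. $\mathrm{NT}_n(\mathbb{K})$ is the space of strictly upper-triangular $n\times n$ matrices. For a non-empty $I\subset\{1,\dots,n\}$, $D_I$ is the diagonal matrix with $(i,i)$ entry $1$ for $i\in I$ and $0$ otherwise. $\mathcal{V}^{(1^\star)}_I:=\mathbb{K}D_I\oplus\mathrm{NT}_n(\mathbb{K})$, and for $I\neq\{1,\dots,n\}$, $\mathcal{V}^{(2)}_I:=\mathbb{K}I_n\oplus\mathbb{K}D_I\oplus\mathrm{NT}_n(\mathbb{K})$. *)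

theory Defs
  imports "Jordan_Normal_Form.Matrix"
begin

text \<open>Matrices are JNF matrices of dimension n x n with 0-based indices 0..n-1.
  Index sets I are subsets of {1..n} as in the paper; paper index k corresponds
  to matrix index k-1.\<close>

definition NT :: "nat \<Rightarrow> 'a::field mat set" where
  "NT n = {A \<in> carrier_mat n n. \<forall>i<n. \<forall>j<n. j \<le> i \<longrightarrow> A $$ (i, j) = 0}"

definition D :: "nat \<Rightarrow> nat set \<Rightarrow> 'a::field mat" where
  "D n I = mat n n (\<lambda>(i, j). if i = j \<and> Suc i \<in> I then 1 else 0)"

definition V1 :: "nat \<Rightarrow> nat set \<Rightarrow> 'a::field mat set" where
  "V1 n I = {c \<cdot>\<^sub>m D n I + N | c N. N \<in> NT n}"

definition V2 :: "nat \<Rightarrow> nat set \<Rightarrow> 'a::field mat set" where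
  "V2 n I = {a \<cdot>\<^sub>m 1\<^sub>m n + b \<cdot>\<^sub>m D n I + N | a b N. N \<in> NT n}"

definition similar_sets :: "nat \<Rightarrow> 'a::field mat set \<Rightarrow> 'a mat set \<Rightarrow> bool" where
  "similar_sets n V W = (\<exists>P Q. P \<in> carrier_mat n n \<and> Q \<in> carrier_mat n n \<and>
      P * Q = 1\<^sub>m n \<and> Q * P = 1\<^sub>m n \<and> W = (\<lambda>A. P * A * Q) ` V)"

end

theory Submission
  imports Defs
begin


definition ut :: "nat \<Rightarrow> 'a::field mat \<Rightarrow> bool" where
  "ut n A \<longleftrightarrow> (\<forall>i<n. \<forall>j<n. j < i \<longrightarrow> A $$ (i,j) = 0)"

lemma mult_entry:
  assumes "A \<in> carrier_mat n n" "B \<in> carrier_mat n n" "i < n" "j < n"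
  shows "(A * B) $$ (i,j) = (\<Sum>k<n. A $$ (i,k) * B $$ (k,j))"
  using assms by (simp add: scalar_prod_def lessThan_atLeast0)

lemma D_carrier[simp]: "D n I \<in> carrier_mat n n"
  by (simp add: D_def)

lemma D_entry[simp]: "i < n \<Longrightarrow> j < n \<Longrightarrow> D n I $$ (i,j) = (if i = j \<and> Suc i \<in> I then 1 else 0)"
  by (simp add: D_def)

lemma mult_ut:
  fixes A B :: "'a::field mat"
  assumes A: "A \<in> carrier_mat n n" and B: "B \<in> carrier_mat n n" and uA: "ut n A" and uB: "ut n B"
  shows "ut n (A * B)" "\<And>i. i < n \<Longrightarrow> (A * B) $$ (i,i) = A $$ (i,i) * B $$ (i,i)"
proof -
  show "ut n (A * B)" unfolding ut_def
  proof (intro allI impI)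
    fix i j assume ij: "i < n" "j < n" "j < i"
    have "(\<Sum>k<n. A $$ (i,k) * B $$ (k,j)) = 0"
    proof (rule sum.neutral, intro ballI)
      fix k assume "k \<in> {..<n}"
      then show "A $$ (i,k) * B $$ (k,j) = 0" using uA uB ij unfolding ut_def
        by (cases "k < i") auto
    qed
    then show "(A * B) $$ (i,j) = 0" using mult_entry[OF A B ij(1,2)] by simp
  qed
next
  fix i assume i: "i < n"
  have "(\<Sum>k<n. A $$ (i,k) * B $$ (k,i)) = A $$ (i,i) * B $$ (i,i) + (\<Sum>k\<in>{..<n}-{i}. A $$ (i,k) * B $$ (k,i))"
    using i by (simp add: sum.remove)
  also have "(\<Sum>k\<in>{..<n}-{i}. A $$ (i,k) * B $$ (k,i)) = 0"
  proof (rule sum.neutral, intro ballI)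
    fix k assume "k \<in> {..<n}-{i}"
    then show "A $$ (i,k) * B $$ (k,i) = 0" using uA uB i unfolding ut_def
      by (cases "k < i") auto
  qed
  finally show "(A * B) $$ (i,i) = A $$ (i,i) * B $$ (i,i)" using mult_entry[OF A B i i] by simp
qed

lemma pow_ut:
  fixes A :: "'a::field mat"
  assumes A: "A \<in> carrier_mat n n" and uA: "ut n A"
  shows "ut n (A ^\<^sub>m k) \<and> (\<forall>i<n. (A ^\<^sub>m k) $$ (i,i) = (A $$ (i,i)) ^ k)"
proof (induction k)
  case 0
  then show ?case using A by (simp add: ut_def)
next
  case (Suc k)
  have Ak: "A ^\<^sub>m k \<in> carrier_mat n n" using A by simp
  show ?case using mult_ut[OF Ak A _ uA] Suc by simp
qed

lemma NT_ut: "N \<in> NT n \<Longrightarrow> ut n N"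
  by (simp add: NT_def ut_def)

lemma NT_pow_entry:
  fixes N :: "'a::field mat"
  assumes N: "N \<in> NT n"
  shows "\<forall>i<n. \<forall>j<n. j < i + k \<longrightarrow> (N ^\<^sub>m k) $$ (i,j) = 0"
proof (induction k)
  case 0
  then show ?case using N by (auto simp add: NT_def)
next
  case (Suc k)
  have Nc: "N \<in> carrier_mat n n" using N by (simp add: NT_def)
  have Nk: "N ^\<^sub>m k \<in> carrier_mat n n" using Nc by simp
  show ?case
  proof (intro allI impI)
    fix i j assume ij: "i < n" "j < n" "j < i + Suc k"
    have "(\<Sum>l<n. (N ^\<^sub>m k) $$ (i,l) * N $$ (l,j)) = 0"
    proof (rule sum.neutral, intro ballI)
      fix l assume l: "l \<in> {..<n}"
      show "(N ^\<^sub>m k) $$ (i,l) * N $$ (l,j) = 0"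
      proof (cases "l < i + k")
        case True then show ?thesis using Suc ij l by simp
      next
        case False then show ?thesis using N ij l by (simp add: NT_def)
      qed
    qed
    then show "(N ^\<^sub>m Suc k) $$ (i,j) = 0" using mult_entry[OF Nk Nc ij(1,2)] by simp
  qed
qed

lemma NT_pow_zero:
  fixes N :: "'a::field mat"
  assumes N: "N \<in> NT n"
  shows "N ^\<^sub>m n = 0\<^sub>m n n"
proof -
  have Nc: "N \<in> carrier_mat n n" using N by (simp add: NT_def)
  show ?thesis
    by (rule eq_matI) (use NT_pow_entry[OF N, of n] Nc in auto)
qed



definition good :: "nat \<Rightarrow> 'a::field mat set \<Rightarrow> bool" where
  "good n V \<longleftrightarrow> V \<subseteq> carrier_mat n n \<and> NT n \<subseteq> V \<and> (\<forall>A\<in>V. A ^\<^sub>m n = 0\<^sub>m n n \<longrightarrow> A \<in> NT n)"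

lemma conj_pow:
  fixes A P Q :: "'a::field mat"
  assumes "A \<in> carrier_mat n n" "P \<in> carrier_mat n n" "Q \<in> carrier_mat n n"
    "P * Q = 1\<^sub>m n" "Q * P = 1\<^sub>m n"
  shows "(P * A * Q) ^\<^sub>m k = P * A ^\<^sub>m k * Q"
proof -
  have "similar_mat_wit (P * A * Q) A P Q"
    unfolding similar_mat_wit_def Let_def using assms by auto
  then show ?thesis by (rule similar_mat_wit_pow_id)
qed

lemma conj_NT:
  fixes P Q :: "'a::field mat"
  assumes gV: "good n V" and gW: "good n W"
    and P: "P \<in> carrier_mat n n" and Q: "Q \<in> carrier_mat n n"
    and PQ: "P * Q = 1\<^sub>m n" and QP: "Q * P = 1\<^sub>m n"
    and W: "W = (\<lambda>A. P * A * Q) ` V"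
  shows "\<forall>E\<in>NT n. Q * E * P \<in> NT n" "\<forall>E\<in>NT n. P * E * Q \<in> NT n"
proof -
  show "\<forall>E\<in>NT n. Q * E * P \<in> NT n"
  proof
    fix E :: "'a mat" assume E: "E \<in> NT n"
    have Ec: "E \<in> carrier_mat n n" using E by (simp add: NT_def)
    have "E \<in> W" using gW E by (auto simp: good_def)
    then obtain A where A: "A \<in> V" and EA: "E = P * A * Q" using W by auto
    have Ac: "A \<in> carrier_mat n n" using A gV by (auto simp: good_def)
    have "Q * E * P = (Q * P) * A * (Q * P)"
      unfolding EA using P Q Ac by (simp add: assoc_mult_mat[of _ n n _ n _ n])
    also have "\<dots> = A" using Ac QP by simp
    finally have QEP: "Q * E * P = A" .
    have "A ^\<^sub>m n = Q * E ^\<^sub>m n * P" using conj_pow[OF Ec Q P QP PQ] QEP by simp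
    also have "\<dots> = 0\<^sub>m n n" using NT_pow_zero[OF E] P Q by simp
    finally have "A \<in> NT n" using gV A by (auto simp: good_def)
    then show "Q * E * P \<in> NT n" using QEP by simp
  qed
  show "\<forall>E\<in>NT n. P * E * Q \<in> NT n"
  proof
    fix E :: "'a mat" assume E: "E \<in> NT n"
    have Ec: "E \<in> carrier_mat n n" using E by (simp add: NT_def)
    have "E \<in> V" using gV E by (auto simp: good_def)
    then have inW: "P * E * Q \<in> W" using W by auto
    have "(P * E * Q) ^\<^sub>m n = P * E ^\<^sub>m n * Q" using conj_pow[OF Ec P Q PQ QP] by simp
    also have "\<dots> = 0\<^sub>m n n" using NT_pow_zero[OF E] P Q by simp
    finally show "P * E * Q \<in> NT n" using gW inW by (auto simp: good_def)
  qed
qed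

definition unitm :: "nat \<Rightarrow> nat \<Rightarrow> nat \<Rightarrow> 'a::field mat" where
  "unitm n a b = mat n n (\<lambda>(i,j). if i = a \<and> j = b then 1 else 0)"

lemma unitm_NT: "a < b \<Longrightarrow> b < n \<Longrightarrow> unitm n a b \<in> NT n"
  by (auto simp: unitm_def NT_def)

lemma unitm_prod:
  fixes P Q :: "'a::field mat"
  assumes P: "P \<in> carrier_mat n n" and Q: "Q \<in> carrier_mat n n"
    and ab: "a < n" "b < n" and rs: "r < n" "s < n"
  shows "(Q * unitm n a b * P) $$ (r,s) = Q $$ (r,a) * P $$ (b,s)"
proof -
  let ?E = "unitm n a b :: 'a mat"
  have Ec: "?E \<in> carrier_mat n n" by (simp add: unitm_def)
  have QE: "Q * ?E \<in> carrier_mat n n" using Q Ec by simp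
  have 1: "\<And>k. k < n \<Longrightarrow> (Q * ?E) $$ (r,k) = (if k = b then Q $$ (r,a) else 0)"
  proof -
    fix k assume k: "k < n"
    have "(Q * ?E) $$ (r,k) = (\<Sum>l<n. Q $$ (r,l) * ?E $$ (l,k))" using mult_entry[OF Q Ec rs(1) k] .
    also have "\<dots> = (\<Sum>l<n. if l = a then (if k = b then Q $$ (r,a) else 0) else 0)"
      by (rule sum.cong) (use k in \<open>auto simp: unitm_def\<close>)
    also have "\<dots> = (if k = b then Q $$ (r,a) else 0)" using ab by simp
    finally show "(Q * ?E) $$ (r,k) = (if k = b then Q $$ (r,a) else 0)" .
  qed
  have "(Q * ?E * P) $$ (r,s) = (\<Sum>k<n. (Q * ?E) $$ (r,k) * P $$ (k,s))" using mult_entry[OF QE P rs] .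
  also have "\<dots> = (\<Sum>k<n. if k = b then Q $$ (r,a) * P $$ (b,s) else 0)"
    by (rule sum.cong) (auto simp: 1)
  also have "\<dots> = Q $$ (r,a) * P $$ (b,s)" using ab by simp
  finally show ?thesis .
qed

lemma ut_from_conj:
  fixes P Q :: "'a::field mat"
  assumes P: "P \<in> carrier_mat n n" and Q: "Q \<in> carrier_mat n n"
    and QP: "Q * P = 1\<^sub>m n" and H: "\<forall>E\<in>NT n. Q * E * P \<in> NT n"
  shows "ut n P"
proof -
  have key: "Q $$ (r,a) * P $$ (b,s) = 0" if "a < b" "b < n" "s \<le> r" "r < n" for a b r s
  proof -
    have "Q * unitm n a b * P \<in> NT n" using H unitm_NT[OF that(1,2)] by blast
    then have "(Q * unitm n a b * P) $$ (r,s) = 0" using that by (auto simp: NT_def)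
    then show ?thesis using unitm_prod[OF P Q, of a b r s] that by simp
  qed
  have QPe: "(\<Sum>a<n. Q $$ (r,a) * P $$ (a,c)) = (if r = c then 1 else 0)" if "r < n" "c < n" for r c
    using mult_entry[OF Q P that] QP that by simp
  have main: "\<forall>s<b. P $$ (b,s) = 0" if "b < n" for b
    using that
  proof (induction "n - b" arbitrary: b rule: less_induct)
    case less
    show ?case
    proof (rule ccontr)
      assume "\<not> (\<forall>s<b. P $$ (b,s) = 0)"
      then obtain s where s: "s < b" "P $$ (b,s) \<noteq> 0" by auto
      have Qz: "Q $$ (r,a) = 0" if "s \<le> r" "r < n" "a < b" for r a
        using key[of a b s r] s that less.prems by simp
      have red: "Q $$ (r,b) * P $$ (b,c) = (if r = c then 1 else 0)"
        if r: "s \<le> r" "r < n" and c: "c \<le> b" for r c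
      proof -
        have cn: "c < n" using c less.prems by simp
        have "(\<Sum>a<n. Q $$ (r,a) * P $$ (a,c)) = Q $$ (r,b) * P $$ (b,c) + (\<Sum>a\<in>{..<n}-{b}. Q $$ (r,a) * P $$ (a,c))"
          using less.prems by (simp add: sum.remove)
        also have "(\<Sum>a\<in>{..<n}-{b}. Q $$ (r,a) * P $$ (a,c)) = 0"
        proof (rule sum.neutral, intro ballI)
          fix a assume a: "a \<in> {..<n}-{b}"
          show "Q $$ (r,a) * P $$ (a,c) = 0"
          proof (cases "a < b")
            case True then show ?thesis using Qz r by simp
          next
            case False
            then have "b < a" using a by auto
            then have "\<forall>s<a. P $$ (a,s) = 0" using less.hyps[of a] a by auto
            then show ?thesis using c \<open>b < a\<close> by simp
          qed
        qed
        finally show ?thesis using QPe[OF r(2) cn] by simp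
      qed
      have sn: "Suc s < n" using s less.prems by simp
      have e1: "Q $$ (s,b) * P $$ (b,s) = 1" using red[of s s] s sn by simp
      have e2: "Q $$ (s,b) * P $$ (b,Suc s) = 0" using red[of s "Suc s"] s sn by simp
      have e3: "Q $$ (Suc s,b) * P $$ (b,Suc s) = 1" using red[of "Suc s" "Suc s"] s sn by simp
      from e1 have "Q $$ (s,b) \<noteq> 0" by auto
      with e2 have "P $$ (b, Suc s) = 0" by simp
      with e3 show False by simp
    qed
  qed
  show ?thesis unfolding ut_def using main by blast
qed



lemma D_dim[simp]: "dim_row (D n I) = n" "dim_col (D n I) = n" by (simp_all add: D_def)

lemma NT_carrier: "N \<in> NT n \<Longrightarrow> N \<in> carrier_mat n n" by (simp add: NT_def)

lemma good_V1:
  assumes "x \<in> I" "I \<subseteq> {1..n}"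
  shows "good n (V1 n I :: 'a::field mat set)"
  unfolding good_def
proof (intro conjI)
  show "V1 n I \<subseteq> (carrier_mat n n :: 'a mat set)" by (auto simp: V1_def NT_def)
  show "NT n \<subseteq> (V1 n I :: 'a mat set)"
  proof
    fix N :: "'a mat" assume N: "N \<in> NT n"
    have "N = 0 \<cdot>\<^sub>m D n I + N" using NT_carrier[OF N] by (intro eq_matI) auto
    then show "N \<in> V1 n I" using N unfolding V1_def by blast
  qed
  show "\<forall>A\<in>(V1 n I :: 'a mat set). A ^\<^sub>m n = 0\<^sub>m n n \<longrightarrow> A \<in> NT n"
  proof (intro ballI impI)
    fix A :: "'a mat" assume A: "A \<in> V1 n I" and A0: "A ^\<^sub>m n = 0\<^sub>m n n"
    then obtain c N where AN: "A = c \<cdot>\<^sub>m D n I + N" and N: "N \<in> NT n" unfolding V1_def by blast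
    have Nc: "N \<in> carrier_mat n n" using NT_carrier[OF N] .
    have Ac: "A \<in> carrier_mat n n" using AN Nc by simp
    have uA: "ut n A" using AN Nc N unfolding ut_def by (auto simp: NT_def)
    obtain i where i: "x = Suc i" "i < n" using assms by (cases x) auto
    have "(A ^\<^sub>m n) $$ (i,i) = (A $$ (i,i)) ^ n" using pow_ut[OF Ac uA] i by simp
    moreover have "A $$ (i,i) = c" using AN Nc N i assms by (auto simp: NT_def)
    ultimately have "c ^ n = 0" using A0 i by simp
    then have "c = 0" by simp
    have "A = N" using AN Nc \<open>c = 0\<close> by (auto intro!: eq_matI)
    then show "A \<in> NT n" using N by simp
  qed
qed

lemma good_V2:
  assumes "x \<in> I" "y \<in> {1..n}" "y \<notin> I" "I \<subseteq> {1..n}"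
  shows "good n (V2 n I :: 'a::field mat set)"
  unfolding good_def
proof (intro conjI)
  show "V2 n I \<subseteq> (carrier_mat n n :: 'a mat set)" by (auto simp: V2_def NT_def)
  show "NT n \<subseteq> (V2 n I :: 'a mat set)"
  proof
    fix N :: "'a mat" assume N: "N \<in> NT n"
    have "N = 0 \<cdot>\<^sub>m 1\<^sub>m n + 0 \<cdot>\<^sub>m D n I + N" using NT_carrier[OF N] by (intro eq_matI) auto
    then show "N \<in> V2 n I" using N unfolding V2_def by blast
  qed
  show "\<forall>A\<in>(V2 n I :: 'a mat set). A ^\<^sub>m n = 0\<^sub>m n n \<longrightarrow> A \<in> NT n"
  proof (intro ballI impI)
    fix A :: "'a mat" assume A: "A \<in> V2 n I" and A0: "A ^\<^sub>m n = 0\<^sub>m n n"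
    then obtain a b N where AN: "A = a \<cdot>\<^sub>m 1\<^sub>m n + b \<cdot>\<^sub>m D n I + N" and N: "N \<in> NT n" unfolding V2_def by blast
    have Nc: "N \<in> carrier_mat n n" using NT_carrier[OF N] .
    have Ac: "A \<in> carrier_mat n n" using AN Nc by simp
    have uA: "ut n A" using AN Nc N unfolding ut_def by (auto simp: NT_def)
    obtain i where i: "x = Suc i" "i < n" using assms by (cases x) auto
    obtain j where j: "y = Suc j" "j < n" using assms by (cases y) auto
    have "(A ^\<^sub>m n) $$ (i,i) = (A $$ (i,i)) ^ n" using pow_ut[OF Ac uA] i by simp
    moreover have "A $$ (i,i) = a + b" using AN Nc N i assms by (auto simp: NT_def)
    ultimately have "(a + b) ^ n = 0" using A0 i by simp
    then have ab: "a + b = 0" by simp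
    have "(A ^\<^sub>m n) $$ (j,j) = (A $$ (j,j)) ^ n" using pow_ut[OF Ac uA] j by simp
    moreover have "A $$ (j,j) = a" using AN Nc N j assms by (auto simp: NT_def)
    ultimately have "a ^ n = 0" using A0 j by simp
    then have "a = 0" by simp
    with ab have "b = 0" by simp
    have "A = N" using AN Nc \<open>a = 0\<close> \<open>b = 0\<close> by (auto intro!: eq_matI)
    then show "A \<in> NT n" using N by simp
  qed
qed

lemma similar_diag:
  fixes V W :: "'a::field mat set"
  assumes gV: "good n V" and gW: "good n W" and S: "similar_sets n V W" and K: "K \<in> V"
    and Kd: "\<forall>i<n. \<forall>j<n. i \<noteq> j \<longrightarrow> K $$ (i,j) = 0"
  shows "\<exists>L\<in>W. \<forall>i<n. L $$ (i,i) = K $$ (i,i) \<and> L \<in> carrier_mat n n"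
proof -
  obtain P Q where P: "P \<in> carrier_mat n n" and Q: "Q \<in> carrier_mat n n"
    and PQ: "P * Q = 1\<^sub>m n" and QP: "Q * P = 1\<^sub>m n" and W: "W = (\<lambda>A. P * A * Q) ` V"
    using S unfolding similar_sets_def by blast
  note c = conj_NT[OF gV gW P Q PQ QP W]
  have uP: "ut n P" using ut_from_conj[OF P Q QP c(1)] .
  have uQ: "ut n Q" using ut_from_conj[OF Q P PQ c(2)] .
  have Kc: "K \<in> carrier_mat n n" using gV K by (auto simp: good_def)
  have uK: "ut n K" using Kd unfolding ut_def by auto
  have PK: "P * K \<in> carrier_mat n n" using P Kc by simp
  have uPK: "ut n (P * K)" using mult_ut(1)[OF P Kc uP uK] .
  have "P * K * Q \<in> W" using W K by auto
  moreover have "\<forall>i<n. (P * K * Q) $$ (i,i) = K $$ (i,i)"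
  proof (intro allI impI)
    fix i assume i: "i < n"
    have "(P * K * Q) $$ (i,i) = P $$ (i,i) * K $$ (i,i) * Q $$ (i,i)"
      using mult_ut(2)[OF PK Q uPK uQ i] mult_ut(2)[OF P Kc uP uK i] by simp
    moreover have "P $$ (i,i) * Q $$ (i,i) = 1" using mult_ut(2)[OF P Q uP uQ i] PQ i by simp
    ultimately show "(P * K * Q) $$ (i,i) = K $$ (i,i)" by (simp add: algebra_simps)
  qed
  moreover have "P * K * Q \<in> carrier_mat n n" using PK Q by simp
  ultimately show ?thesis by blast
qed

lemma similar_refl:
  assumes "V \<subseteq> carrier_mat n n"
  shows "similar_sets n V V"
  unfolding similar_sets_def
proof (intro exI conjI)
  show "V = (\<lambda>A. 1\<^sub>m n * A * 1\<^sub>m n) ` V"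
  proof -
    have "(\<lambda>A. 1\<^sub>m n * A * 1\<^sub>m n) ` V = id ` V"
      by (rule image_cong) (use assms in auto)
    then show ?thesis by simp
  qed
qed auto

lemma V2_compl:
  assumes "J \<subseteq> {1..n}"
  shows "V2 n ({1..n} - J) = (V2 n J :: 'a::field mat set)"
proof -
  have D: "D n ({1..n} - J) = 1\<^sub>m n + (-1 :: 'a) \<cdot>\<^sub>m D n J"
    by (rule eq_matI) (use assms in auto)
  have e: "a \<cdot>\<^sub>m 1\<^sub>m n + b \<cdot>\<^sub>m D n ({1..n} - J) + N = (a + b) \<cdot>\<^sub>m 1\<^sub>m n + (- b) \<cdot>\<^sub>m D n J + N"
    if "N \<in> carrier_mat n n" for a b :: 'a and N
    unfolding D by (rule eq_matI) (use that in \<open>auto simp: algebra_simps\<close>)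
  have e2: "a \<cdot>\<^sub>m 1\<^sub>m n + b \<cdot>\<^sub>m D n J + N = (a + b) \<cdot>\<^sub>m 1\<^sub>m n + (- b) \<cdot>\<^sub>m D n ({1..n} - J) + N"
    if "N \<in> carrier_mat n n" for a b :: 'a and N
    using e[OF that, of "a+b" "-b"] by simp
  show ?thesis unfolding V2_def
    using e e2 NT_carrier by blast
qed



lemma set_eq_idx:
  assumes "I \<subseteq> {1..n}" "J \<subseteq> {1..n}" "\<forall>i<n. Suc i \<in> I \<longleftrightarrow> Suc i \<in> J"
  shows "I = J"
proof (rule Set.set_eqI)
  fix x
  show "x \<in> I \<longleftrightarrow> x \<in> J"
  proof (cases x)
    case 0 then show ?thesis using assms by auto
  next
    case (Suc i)
    show ?thesis
    proof (cases "i < n")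
      case True then show ?thesis using assms Suc by auto
    next
      case False then show ?thesis using assms Suc by auto
    qed
  qed
qed

lemma part1:
  fixes I J :: "nat set"
  assumes I: "I \<noteq> {}" "I \<subseteq> {1..n}" and J: "J \<noteq> {}" "J \<subseteq> {1..n}"
  shows "similar_sets n (V1 n I :: 'a::field mat set) (V1 n J) \<longleftrightarrow> I = J"
proof
  assume S: "similar_sets n (V1 n I :: 'a::field mat set) (V1 n J)"
  obtain x where x: "x \<in> I" using I by auto
  obtain y where y: "y \<in> J" using J by auto
  have gI: "good n (V1 n I :: 'a mat set)" using good_V1[OF x I(2)] .
  have gJ: "good n (V1 n J :: 'a mat set)" using good_V1[OF y J(2)] .
  have K: "(D n I :: 'a mat) \<in> V1 n I"
  proof -
    have "(D n I :: 'a mat) = 1 \<cdot>\<^sub>m D n I + 0\<^sub>m n n" by (rule eq_matI) auto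
    moreover have "(0\<^sub>m n n :: 'a mat) \<in> NT n" by (simp add: NT_def)
    ultimately show ?thesis unfolding V1_def by blast
  qed
  obtain L where L: "L \<in> V1 n J" and Ld: "\<forall>i<n. L $$ (i,i) = (D n I :: 'a mat) $$ (i,i)"
    using similar_diag[OF gI gJ S K] by auto
  obtain c N where LN: "L = c \<cdot>\<^sub>m D n J + N" and N: "N \<in> NT n" using L unfolding V1_def by blast
  have eq: "(if Suc i \<in> I then 1 else 0) = c * (if Suc i \<in> J then 1 else (0::'a))" if "i < n" for i
    using Ld[rule_format, OF that] LN N that by (auto simp: NT_def)
  obtain i where i: "x = Suc i" "i < n" using x I by (cases x) auto
  have "c = 1" using eq[OF i(2)] x i by (auto split: if_splits)
  have "\<forall>i<n. Suc i \<in> I \<longleftrightarrow> Suc i \<in> J"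
  proof (intro allI impI)
    fix i assume "i < n"
    then show "Suc i \<in> I \<longleftrightarrow> Suc i \<in> J" using eq[of i] \<open>c = 1\<close>
      by (cases "Suc i \<in> I"; cases "Suc i \<in> J") auto
  qed
  then show "I = J" using set_eq_idx I J by blast
next
  assume IJ: "I = J"
  have "(V1 n I :: 'a mat set) \<subseteq> carrier_mat n n" by (auto simp: V1_def NT_def)
  from similar_refl[OF this] IJ show "similar_sets n (V1 n I :: 'a::field mat set) (V1 n J)" by simp
qed

lemma part2:
  fixes I J :: "nat set"
  assumes I: "I \<noteq> {}" "I \<subset> {1..n}" and J: "J \<noteq> {}" "J \<subset> {1..n}"
  shows "similar_sets n (V2 n I :: 'a::field mat set) (V2 n J) \<longleftrightarrow> I = J \<or> I = {1..n} - J"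
proof
  assume S: "similar_sets n (V2 n I :: 'a::field mat set) (V2 n J)"
  obtain x where x: "x \<in> I" using I by auto
  obtain x' where x': "x' \<in> {1..n}" "x' \<notin> I" using I(2) by blast
  obtain y where y: "y \<in> J" using J by auto
  obtain y' where y': "y' \<in> {1..n}" "y' \<notin> J" using J(2) by blast
  have gI: "good n (V2 n I :: 'a mat set)" using good_V2[OF x x'] I by auto
  have gJ: "good n (V2 n J :: 'a mat set)" using good_V2[OF y y'] J by auto
  have K: "(D n I :: 'a mat) \<in> V2 n I"
  proof -
    have "(D n I :: 'a mat) = 0 \<cdot>\<^sub>m 1\<^sub>m n + 1 \<cdot>\<^sub>m D n I + 0\<^sub>m n n" by (rule eq_matI) auto
    moreover have "(0\<^sub>m n n :: 'a mat) \<in> NT n" by (simp add: NT_def)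
    ultimately show ?thesis unfolding V2_def by blast
  qed
  obtain L where L: "L \<in> V2 n J" and Ld: "\<forall>i<n. L $$ (i,i) = (D n I :: 'a mat) $$ (i,i)"
    using similar_diag[OF gI gJ S K] by auto
  obtain a b N where LN: "L = a \<cdot>\<^sub>m 1\<^sub>m n + b \<cdot>\<^sub>m D n J + N" and N: "N \<in> NT n"
    using L unfolding V2_def by blast
  have eq: "(if Suc i \<in> I then 1 else 0) = a + b * (if Suc i \<in> J then 1 else (0::'a))" if "i < n" for i
    using Ld[rule_format, OF that] LN N that by (auto simp: NT_def)
  obtain i where i: "x = Suc i" "i < n" using x I by (cases x) auto
  obtain i' where i': "x' = Suc i'" "i' < n" using x' by (cases x') auto
  obtain j where j: "y = Suc j" "j < n" using y J by (cases y) auto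
  obtain j' where j': "y' = Suc j'" "j' < n" using y' by (cases y') auto
  have b0: "b \<noteq> 0"
  proof
    assume "b = 0"
    then have "1 = a" "0 = a" using eq[OF i(2)] eq[OF i'(2)] x x' i i' by auto
    then show False by simp
  qed
  have ej: "(if Suc j \<in> I then 1 else 0) = a + b" using eq[OF j(2)] y j by simp
  have ej': "(if Suc j' \<in> I then 1 else 0) = a" using eq[OF j'(2)] y' j' by simp
  show "I = J \<or> I = {1..n} - J"
  proof (cases "a = 0")
    case True
    then have "b = 1" using ej b0 by (auto split: if_splits)
    have "\<forall>i<n. Suc i \<in> I \<longleftrightarrow> Suc i \<in> J"
    proof (intro allI impI)
      fix i assume "i < n"
      then show "Suc i \<in> I \<longleftrightarrow> Suc i \<in> J" using eq[of i] True \<open>b = 1\<close>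
        by (cases "Suc i \<in> I"; cases "Suc i \<in> J") auto
    qed
    then have "I = J" using set_eq_idx I J by blast
    then show ?thesis by simp
  next
    case False
    then have a1: "a = 1" using ej' by (auto split: if_splits)
    then have "a + b = 0" using ej b0 by (auto split: if_splits)
    have "\<forall>i<n. Suc i \<in> I \<longleftrightarrow> Suc i \<in> {1..n} - J"
    proof (intro allI impI)
      fix i assume "i < n"
      then show "Suc i \<in> I \<longleftrightarrow> Suc i \<in> {1..n} - J" using eq[of i] a1 \<open>a + b = 0\<close>
        by (cases "Suc i \<in> I"; cases "Suc i \<in> J") auto
    qed
    then have "I = {1..n} - J" using set_eq_idx[of I n "{1..n} - J"] I by auto
    then show ?thesis by simp
  qed
next
  assume H: "I = J \<or> I = {1..n} - J"
  have "V2 n I = (V2 n J :: 'a mat set)"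
    using H V2_compl[of J n] J by auto
  moreover have "(V2 n I :: 'a mat set) \<subseteq> carrier_mat n n" by (auto simp: V2_def NT_def)
  ultimately show "similar_sets n (V2 n I :: 'a::field mat set) (V2 n J)" using similar_refl[of "V2 n I" n] by (metis (no_types))
qed

theorem mainTheorem3:
  fixes n :: nat and I J :: "nat set"
  assumes "n \<ge> 1"
  shows "(I \<noteq> {} \<and> I \<subseteq> {1..n} \<and> J \<noteq> {} \<and> J \<subseteq> {1..n} \<longrightarrow>
            (similar_sets n (V1 n I :: 'a::field mat set) (V1 n J) \<longleftrightarrow> I = J))
       \<and> (I \<noteq> {} \<and> I \<subset> {1..n} \<and> J \<noteq> {} \<and> J \<subset> {1..n} \<longrightarrow>
            (similar_sets n (V2 n I :: 'a::field mat set) (V2 n J) \<longleftrightarrow> I = J \<or> I = {1..n} - J))"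
  using part1[of I n J] part2[of I n J] by blast

end
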